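(* Let $M,K$ be symmetric positive definite $d\times d$ matrices and $H(q,p)=\frac12p^TM^{-1}p+\frac12q^TKq$. Write $M=LL^T$ and $U^TL^{-1}KL^{-T}U=\Omega^2=\mathrm{diag}(\omega_1^2,\dots,\omega_d^2)$ with $U$ orthogonal and $\omega_i>0$, and introduce modal variables by $q=L^{-T}U\Omega^{-1}Q$, $p=LUP$ (so $H=\frac12\sum_i((P^i)^2+(Q^i)^2)$). For $k>0$ let $\tilde M(k)=\begin{bmatrix}\cos\theta(k)&\chi(k)\sin\theta(k)\\-\chi(k)^{-1}\sin\theta(k)&\cos\theta(k)\end{bmatrix}$ with $\theta(k)\in\mathbb{R}$, $\chi(k)\ne0$, and set $\rho(k)=\frac12(\chi(k)-\chi(k)^{-1})^2$. Suppose a numerical map $\psi_h$ acts in the modal variables by $(Q^i,P^i)\mapsto\tilde M(\omega_ih)(Q^i,P^i)^T$ independently for each $i$ (as is the case for a consistent reversible volume-preserving integrator such as a palindromic splitting method applied with stable step size $h$, $\tilde M(k)$ being its one-step matrix with step $k$ for the oscillator $dq/dt=p,dp/dt=-q$). If $(q_0,p_0)$ has density $\propto e^{-H}$ and $(q_n,p_n)=\psi_h^n(q_0,p_0)$, then for every $n$ $$0\le\mathbb{E}\big(H(q_n,p_n)-H(q_0,p_0)\big)\le\sum_{j=1}^d\rho(\omega_jh).$$ *)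

theory Defs
  imports "HOL-Analysis.Analysis"
begin

definition sym_pos_def :: "real^'n^'n \<Rightarrow> bool" where
  "sym_pos_def A \<longleftrightarrow> transpose A = A \<and> (\<forall>x. x \<noteq> 0 \<longrightarrow> x \<bullet> (A *v x) > 0)"

definition Ham :: "real^'n^'n \<Rightarrow> real^'n^'n \<Rightarrow> (real^'n) \<times> (real^'n) \<Rightarrow> real" where
  "Ham M K z = (1/2) * (snd z \<bullet> (matrix_inv M *v snd z)) + (1/2) * (fst z \<bullet> (K *v fst z))"

text \<open>Modal variables: from q = L^{-T} U Omega^{-1} Q we get Q = Omega U^T L^T q;
  from p = L U P we get P = U^T L^{-1} p.\<close>
definition modal_Q :: "real^'n^'n \<Rightarrow> real^'n^'n \<Rightarrow> ('n \<Rightarrow> real) \<Rightarrow> (real^'n) \<times> (real^'n) \<Rightarrow> real^'n" where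
  "modal_Q L U \<omega> z = (\<chi> i. \<omega> i * ((transpose U ** transpose L) *v fst z) $ i)"

definition modal_P :: "real^'n^'n \<Rightarrow> real^'n^'n \<Rightarrow> (real^'n) \<times> (real^'n) \<Rightarrow> real^'n" where
  "modal_P L U z = (transpose U ** matrix_inv L) *v snd z"

definition rho :: "(real \<Rightarrow> real) \<Rightarrow> real \<Rightarrow> real" where
  "rho chi k = (1/2) * (chi k - 1 / chi k)^2"

end

theory Submission
  imports Defs
begin


lemma nn_integral_eu_affine:
  fixes f :: "'a::euclidean_space \<Rightarrow> ennreal" and c :: real
  assumes [measurable]: "f \<in> borel_measurable borel" and c: "c \<noteq> 0"
  shows "(\<integral>\<^sup>+x. f x \<partial>lborel) = ennreal (\<bar>c\<bar>^DIM('a)) * (\<integral>\<^sup>+x. f (t + c *\<^sub>R x) \<partial>lborel)"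
  by (subst lborel_affine[OF c, of t])
     (simp add: nn_integral_density nn_integral_distr nn_integral_cmult)

lemma eu_integrable_affine:
  fixes f :: "'a::euclidean_space \<Rightarrow> real"
  assumes f: "integrable lborel f" and c: "c \<noteq> 0"
  shows "integrable lborel (\<lambda>x. f (t + c *\<^sub>R x))"
proof -
  have [measurable]: "f \<in> borel_measurable borel" using f by auto
  show ?thesis
  using f c unfolding integrable_iff_bounded
  by (subst (asm) nn_integral_eu_affine[where c=c and t=t]) (auto simp: ennreal_mult_less_top)
qed

lemma eu_integrable_affine_iff:
  fixes f :: "'a::euclidean_space \<Rightarrow> real"
  assumes c: "c \<noteq> 0"
  shows "integrable lborel (\<lambda>x. f (t + c *\<^sub>R x)) \<longleftrightarrow> integrable lborel f"
proof
  assume "integrable lborel (\<lambda>x. f (t + c *\<^sub>R x))"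
  from eu_integrable_affine[OF this, of "1/c" "- t /\<^sub>R c"] c
  show "integrable lborel f" by (simp add: algebra_simps)
qed (rule eu_integrable_affine[OF _ c])

lemma eu_integral_affine:
  fixes f :: "'a::euclidean_space \<Rightarrow> real" and c :: real
  assumes c: "c \<noteq> 0"
  shows "(\<integral>x. f x \<partial>lborel) = \<bar>c\<bar>^DIM('a) * (\<integral>x. f (t + c *\<^sub>R x) \<partial>lborel)"
proof cases
  assume f[measurable]: "integrable lborel f" then show ?thesis
    using c f f[THEN borel_measurable_integrable] eu_integrable_affine[OF f c, of t]
    by (subst lborel_affine[OF c, of t])
       (simp add: integral_density integral_distr)
next
  assume "\<not> integrable lborel f" with c show ?thesis
    by (simp add: eu_integrable_affine_iff not_integrable_integral_eq)
qed

lemma exp_sym_ge: "2 + x^2 \<le> exp x + exp (- x :: real)"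
proof -
  define y where "y = \<bar>x\<bar> / 2"
  have y0: "0 \<le> y" by (simp add: y_def)
  define a where "a = 1 + y + y^2/2"
  have a1: "1 \<le> a" using y0 by (simp add: a_def)
  have ea: "a \<le> exp y" using exp_lower_Taylor_quadratic[OF y0] by (simp add: a_def)
  have em: "exp (-y) \<le> 1 / a" using ea a1 by (simp add: exp_minus field_simps)
  have "2 * y \<le> a - 1 / a"
  proof -
    have "a * a - 2 * y * a - 1 = y^4 / 4" by (simp add: a_def power2_eq_square power4_eq_xxxx field_simps)
    moreover have "0 \<le> y^4 / 4" by simp
    ultimately have "0 \<le> a * a - 2 * y * a - 1" by linarith
    then show ?thesis using a1 by (simp add: field_simps)
  qed
  then have d: "2 * y \<le> exp y - exp (-y)" using ea em by linarith
  have "exp x + exp (-x) = exp (2*y) + exp (-(2*y))"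
    by (cases "x \<ge> 0") (auto simp: y_def)
  also have "\<dots> = (exp y - exp (-y))^2 + 2"
    by (simp add: power2_eq_square algebra_simps exp_add[symmetric])
  finally have eq: "exp x + exp (-x) = (exp y - exp (-y))^2 + 2" .
  have "x^2 = (2*y)^2" by (simp add: y_def)
  also have "\<dots> \<le> (exp y - exp (-y))^2" using d y0 by (intro power_mono) auto
  finally show ?thesis using eq by linarith
qed




lemma lim_helper1:
  fixes a b :: real
  assumes "\<And>u. 0 < u \<Longrightarrow> u < 1 \<Longrightarrow> a \<le> b / (1 - u)"
  shows "a \<le> b"
proof -
  have "((\<lambda>u. b / (1 - u)) \<longlongrightarrow> b / (1 - 0)) (at_right 0)"
    by (intro tendsto_intros) auto
  then have lim: "((\<lambda>u. b / (1 - u)) \<longlongrightarrow> b) (at_right 0)" by simp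
  have ev: "eventually (\<lambda>u. a \<le> b / (1 - u)) (at_right (0::real))"
    by (rule eventually_mono[OF eventually_at_right_real[of 0 1]]) (use assms in auto)
  show ?thesis by (rule tendsto_le[OF _ lim tendsto_const ev]) simp
qed

lemma lim_helper2:
  fixes a b :: real and D :: nat
  assumes "\<And>t. 1 < t \<Longrightarrow> b / ((t + 1) * t ^ D) \<le> a"
  shows "b / 2 \<le> a"
proof -
  have "((\<lambda>t. b / ((t + 1) * t ^ D)) \<longlongrightarrow> b / ((1 + 1) * 1 ^ D)) (at_right 1)"
    by (intro tendsto_intros) auto
  then have lim: "((\<lambda>t. b / ((t + 1) * t ^ D)) \<longlongrightarrow> b / 2) (at_right 1)" by simp
  have ev: "eventually (\<lambda>t. b / ((t + 1) * t ^ D) \<le> a) (at_right (1::real))"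
    by (rule eventually_mono[OF eventually_at_right_real[of 1 2]]) (use assms in auto)
  show ?thesis by (rule tendsto_le[OF _ tendsto_const lim ev]) simp
qed

lemma tilt_alg: "s * (e \<bullet> (s *\<^sub>R e + w)) + (- ((s *\<^sub>R e + w) \<bullet> (s *\<^sub>R e + w)) / 2)
        = s^2 * (e \<bullet> e) / 2 + (- (w \<bullet> w) / 2)" for e w :: "'a::real_inner"
  by (simp add: inner_add_left inner_add_right inner_commute[of w e] power2_eq_square field_simps)

context
  fixes T :: "'a::euclidean_space \<Rightarrow> 'b::euclidean_space"
  assumes lin: "linear T"
begin

definition "Phi z = exp (- (T z \<bullet> T z) / 2)"

lemma contT: "continuous_on UNIV T"
  using lin by (simp add: linear_conv_bounded_linear linear_continuous_on)

lemma Phi_meas[measurable]: "Phi \<in> borel_measurable borel"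
  unfolding Phi_def by (intro borel_measurable_continuous_onI continuous_intros contT) auto

lemma tilt:
  assumes sur: "surj T" and int: "integrable lborel Phi"
  shows "integrable lborel (\<lambda>z. exp (s * (e \<bullet> T z)) * Phi z)"
    and "(\<integral>z. exp (s * (e \<bullet> T z)) * Phi z \<partial>lborel) = exp (s^2 * (e \<bullet> e) / 2) * (\<integral>z. Phi z \<partial>lborel)"
proof -
  obtain c where Tc: "T c = s *\<^sub>R e" using sur by (metis surjD)
  define f where "f z = exp (s * (e \<bullet> T z)) * Phi z" for z
  have fc: "f (c + 1 *\<^sub>R z) = exp (s^2 * (e \<bullet> e) / 2) * Phi z" for z
  proof -
    have "T (c + 1 *\<^sub>R z) = s *\<^sub>R e + T z" using lin Tc by (simp add: linear_add)
    then have "s * (e \<bullet> T (c + 1 *\<^sub>R z)) + (- (T (c + 1 *\<^sub>R z) \<bullet> T (c + 1 *\<^sub>R z)) / 2)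
        = s^2 * (e \<bullet> e) / 2 + (- (T z \<bullet> T z) / 2)"
      by (simp only: tilt_alg)
    then show ?thesis unfolding f_def Phi_def by (simp add: exp_add[symmetric])
  qed
  have "integrable lborel (\<lambda>z. f (c + 1 *\<^sub>R z))"
    unfolding fc using int by simp
  then have "integrable lborel f"
    using eu_integrable_affine_iff[of 1 f c] by simp
  then show i: "integrable lborel (\<lambda>z. exp (s * (e \<bullet> T z)) * Phi z)"
    by (simp add: f_def[abs_def])
  have "(\<integral>z. f z \<partial>lborel) = \<bar>1::real\<bar>^DIM('a) * (\<integral>z. f (c + 1 *\<^sub>R z) \<partial>lborel)"
    by (rule eu_integral_affine) simp
  then show "(\<integral>z. exp (s * (e \<bullet> T z)) * Phi z \<partial>lborel) = exp (s^2 * (e \<bullet> e) / 2) * (\<integral>z. Phi z \<partial>lborel)"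
    unfolding fc by (simp add: f_def[abs_def])
qed

lemma moment:
  assumes sur: "surj T" and int: "integrable lborel Phi"
  shows "integrable lborel (\<lambda>z. (e \<bullet> T z)^2 * Phi z)"
    and "(\<integral>z. (e \<bullet> T z)^2 * Phi z \<partial>lborel) \<le> (e \<bullet> e) * (\<integral>z. Phi z \<partial>lborel)"
proof -
  define Z where "Z = (\<integral>z. Phi z \<partial>lborel)"
  define \<sigma> where "\<sigma> = e \<bullet> e"
  define g where "g s z = exp (s * (e \<bullet> T z)) * Phi z + exp ((-s) * (e \<bullet> T z)) * Phi z" for s z
  have Phi_nn: "0 \<le> Phi z" for z by (simp add: Phi_def)
  have Z_nn: "0 \<le> Z" unfolding Z_def by (rule Bochner_Integration.integral_nonneg) (simp add: Phi_nn)
  have gi: "integrable lborel (g s)" for s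
    unfolding g_def[abs_def] by (rule Bochner_Integration.integrable_add; rule tilt(1)[OF sur int])
  have gint: "(\<integral>z. g s z \<partial>lborel) = 2 * exp (s^2 * \<sigma> / 2) * Z" for s
  proof -
    have t1: "(\<integral>z. exp (s * (e \<bullet> T z)) * Phi z \<partial>lborel) = exp (s^2 * \<sigma> / 2) * Z"
      using tilt(2)[OF sur int, of s e] by (simp add: Z_def \<sigma>_def)
    have t2: "(\<integral>z. exp ((-s) * (e \<bullet> T z)) * Phi z \<partial>lborel) = exp (s^2 * \<sigma> / 2) * Z"
      using tilt(2)[OF sur int, of "-s" e] by (simp add: Z_def \<sigma>_def)
    show ?thesis unfolding g_def[abs_def]
      by (subst Bochner_Integration.integral_add; (rule tilt[OF sur int])?) (simp only: t1 t2)
  qed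
  have pw: "(s * (e \<bullet> T z))^2 * Phi z \<le> g s z - 2 * Phi z" for s z
  proof -
    have "2 + (s * (e \<bullet> T z))^2 \<le> exp (s * (e \<bullet> T z)) + exp (- (s * (e \<bullet> T z)))"
      by (rule exp_sym_ge)
    then have "(2 + (s * (e \<bullet> T z))^2) * Phi z \<le> (exp (s * (e \<bullet> T z)) + exp (- (s * (e \<bullet> T z)))) * Phi z"
      using Phi_nn by (rule mult_right_mono)
    then show ?thesis by (simp add: g_def algebra_simps)
  qed
  have meas: "(\<lambda>z. (e \<bullet> T z)^2 * Phi z) \<in> borel_measurable borel"
    unfolding Phi_def by (intro borel_measurable_continuous_onI continuous_intros contT) auto
  show I: "integrable lborel (\<lambda>z. (e \<bullet> T z)^2 * Phi z)"
  proof (rule Bochner_Integration.integrable_bound[OF gi[of 1]])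
    show "(\<lambda>z. (e \<bullet> T z)^2 * Phi z) \<in> borel_measurable lborel" using meas by simp
    show "AE x in lborel. norm ((e \<bullet> T x)\<^sup>2 * Phi x) \<le> norm (g 1 x)"
    proof (rule AE_I2)
      fix x
      have "(e \<bullet> T x)\<^sup>2 * Phi x \<le> g 1 x" using pw[of 1 x] Phi_nn[of x] by simp
      moreover have "0 \<le> (e \<bullet> T x)\<^sup>2 * Phi x" using Phi_nn[of x] by simp
      ultimately show "norm ((e \<bullet> T x)\<^sup>2 * Phi x) \<le> norm (g 1 x)" by simp
    qed
  qed
  define I where "I = (\<integral>z. (e \<bullet> T z)^2 * Phi z \<partial>lborel)"
  have I_nn: "0 \<le> I" unfolding I_def by (rule Bochner_Integration.integral_nonneg) (simp add: Phi_nn)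
  have key: "s^2 * I \<le> 2 * exp (s^2 * \<sigma> / 2) * Z - 2 * Z" for s
  proof -
    have "s^2 * I = (\<integral>z. (s * (e \<bullet> T z))^2 * Phi z \<partial>lborel)"
      unfolding I_def by (simp add: power_mult_distrib mult.assoc)
    also have "\<dots> \<le> (\<integral>z. g s z - 2 * Phi z \<partial>lborel)"
      using I int gi pw by (intro integral_mono) (auto simp: power_mult_distrib mult.assoc)
    also have "\<dots> = 2 * exp (s^2 * \<sigma> / 2) * Z - 2 * Z"
      using gi int by (simp add: gint Z_def)
    finally show ?thesis .
  qed
  have "I \<le> \<sigma> * Z"
  proof (cases "\<sigma> = 0")
    case True
    then show ?thesis using key[of 1] by simp
  next
    case False
    then have sp: "0 < \<sigma>" by (simp add: \<sigma>_def)
    show ?thesis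
    proof (rule lim_helper1)
      fix u :: real assume u0: "0 < u" and u1: "u < 1"
      define s where "s = sqrt (2 * u / \<sigma>)"
      have s2: "s^2 = 2 * u / \<sigma>" unfolding s_def using u0 sp by simp
      have su: "s^2 * \<sigma> / 2 = u" using s2 sp by simp
      have "2 * u / \<sigma> * I \<le> 2 * exp u * Z - 2 * Z" using key[of s] unfolding su s2[symmetric] by simp
      then have A: "u * I \<le> \<sigma> * Z * (exp u - 1)" using sp by (simp add: field_simps)
      have "1 - u \<le> exp (- u)" using exp_ge_add_one_self[of "-u"] by simp
      then have "(1 - u) * exp u \<le> 1" by (simp add: exp_minus field_simps)
      then have e1: "exp u \<le> 1 / (1 - u)" using u1 by (simp add: field_simps)
      have "1 / (1 - u) - 1 = u / (1 - u)" using u1 by (simp add: field_simps)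
      with e1 have "exp u - 1 \<le> u / (1 - u)" by linarith
      then have "\<sigma> * Z * (exp u - 1) \<le> \<sigma> * Z * (u / (1 - u))"
        using sp Z_nn by (intro mult_left_mono) auto
      with A have "u * I \<le> u * (\<sigma> * Z / (1 - u))" by (simp add: field_simps)
      then show "I \<le> \<sigma> * Z / (1 - u)" using u0 by (simp only: mult_le_cancel_left_pos)
    qed
  qed
  then show "(\<integral>z. (e \<bullet> T z)^2 * Phi z \<partial>lborel) \<le> (e \<bullet> e) * (\<integral>z. Phi z \<partial>lborel)"
    by (simp add: I_def \<sigma>_def Z_def)
qed

lemma scale_lb:
  assumes int: "integrable lborel Phi" and intW: "integrable lborel (\<lambda>z. (T z \<bullet> T z) * Phi z)"
  shows "real DIM('a) * (\<integral>z. Phi z \<partial>lborel) \<le> (\<integral>z. (T z \<bullet> T z) * Phi z \<partial>lborel)"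
proof -
  define Z where "Z = (\<integral>z. Phi z \<partial>lborel)"
  define W where "W = (\<integral>z. (T z \<bullet> T z) * Phi z \<partial>lborel)"
  define D where "D = DIM('a)"
  have Phi_nn: "0 \<le> Phi z" for z by (simp add: Phi_def)
  have Z_nn: "0 \<le> Z" unfolding Z_def by (rule Bochner_Integration.integral_nonneg) (simp add: Phi_nn)
  have "real D * Z * 2 / ((t + 1) * t ^ D) \<le> W" if t1: "1 < t" for t
  proof -
    have t0: "t \<noteq> 0" using t1 by simp
    have PhiT: "Phi (0 + t *\<^sub>R z) = exp (- (t^2 * (T z \<bullet> T z)) / 2)" for z
      using lin by (simp add: Phi_def linear_cmul power2_eq_square mult.assoc)
    have iT: "integrable lborel (\<lambda>z. Phi (0 + t *\<^sub>R z))"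
      using eu_integrable_affine_iff[OF t0, of Phi 0] int by simp
    have ZT: "Z = t^D * (\<integral>z. Phi (0 + t *\<^sub>R z) \<partial>lborel)"
      unfolding Z_def D_def using eu_integral_affine[OF t0, of Phi 0] t1 by simp
    have pw: "Phi z - (t^2 - 1) / 2 * ((T z \<bullet> T z) * Phi z) \<le> Phi (0 + t *\<^sub>R z)" for z
    proof -
      define X where "X = (T z \<bullet> T z) / 2"
      have "1 - (t^2 - 1) * X \<le> exp (- ((t^2 - 1) * X))"
        using exp_ge_add_one_self[of "- ((t^2 - 1) * X)"] by simp
      then have "exp (- X) * (1 - (t^2 - 1) * X) \<le> exp (- X) * exp (- ((t^2 - 1) * X))"
        by (rule mult_left_mono) simp
      also have "\<dots> = exp (- (t^2 * X))" by (simp add: exp_add[symmetric] algebra_simps)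
      finally show ?thesis unfolding PhiT by (simp add: Phi_def X_def algebra_simps)
    qed
    have "Z - (t^2 - 1) / 2 * W \<le> (\<integral>z. Phi (0 + t *\<^sub>R z) \<partial>lborel)"
    proof -
      have "Z - (t^2 - 1) / 2 * W = (\<integral>z. Phi z - (t^2 - 1) / 2 * ((T z \<bullet> T z) * Phi z) \<partial>lborel)"
        using int intW by (simp add: Z_def W_def)
      also have "\<dots> \<le> (\<integral>z. Phi (0 + t *\<^sub>R z) \<partial>lborel)"
        using int intW iT pw by (intro integral_mono) auto
      finally show ?thesis .
    qed
    then have A: "t^D * (Z - (t^2 - 1) / 2 * W) \<le> Z" using ZT t1 by (simp add: mult_left_mono)
    have B: "1 + real D * (t - 1) \<le> t^D" using Bernoulli_inequality[of "t - 1" D] t1 by simp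
    have "Z * (1 + real D * (t - 1)) \<le> Z * t^D" using B Z_nn by (rule mult_left_mono)
    then have B': "real D * Z * (t - 1) \<le> Z * t^D - Z" by (simp add: algebra_simps)
    have "t^D * (Z - (t^2 - 1) / 2 * W) = Z * t^D - (t^2 - 1) / 2 * W * t^D" by (simp add: algebra_simps)
    with A have A': "Z * t^D - Z \<le> (t^2 - 1) / 2 * W * t^D" by linarith
    from A' B' have C: "real D * Z * (t - 1) \<le> (t^2 - 1) / 2 * W * t^D" by linarith
    have E: "(t^2 - 1) / 2 * W * t^D = (t - 1) * ((t + 1) * t ^ D * W / 2)"
      by (simp add: power2_eq_square algebra_simps)
    from C have "real D * Z * (t - 1) \<le> (t - 1) * ((t + 1) * t ^ D * W / 2)" unfolding E .
    then have "real D * Z \<le> (t + 1) * t ^ D * W / 2" using t1 by (simp add: mult.commute)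
    moreover have "0 < (t + 1) * t ^ D" using t1 by simp
    ultimately show ?thesis by (simp add: field_simps)
  qed
  then have "real D * Z * 2 / 2 \<le> W" by (rule lim_helper2)
  then show ?thesis by (simp add: Z_def W_def D_def)
qed

end


lemma matrix_inv_props:
  fixes A :: "real^'n^'n"
  assumes "invertible A"
  shows "A ** matrix_inv A = mat 1" "matrix_inv A ** A = mat 1"
proof -
  have "\<exists>A'. A ** A' = mat 1 \<and> A' ** A = mat 1" using assms by (simp add: invertible_def)
  then have "A ** matrix_inv A = mat 1 \<and> matrix_inv A ** A = mat 1"
    unfolding matrix_inv_def by (rule someI_ex)
  then show "A ** matrix_inv A = mat 1" "matrix_inv A ** A = mat 1" by auto
qed

lemma dot_transpose_mv: "(transpose A *v x) \<bullet> y = x \<bullet> ((A::real^'n^'n) *v y)"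
  by (simp add: transpose_matrix_vector dot_lmul_matrix)

lemma L_invertible:
  fixes M L :: "real^'n^'n"
  assumes M_spd: "sym_pos_def M" and L_fact: "M = L ** transpose L"
  shows "invertible L"
proof -
  have "\<forall>x. transpose L *v x = 0 \<longrightarrow> x = 0"
  proof (intro allI impI)
    fix x assume "transpose L *v x = 0"
    then have "M *v x = 0" using L_fact by (metis matrix_vector_mul_assoc matrix_vector_mult_0_right)
    then show "x = 0" using M_spd unfolding sym_pos_def_def by force
  qed
  then have "invertible (transpose L)" by (simp add: invertible_left_inverse matrix_left_invertible_ker)
  then show ?thesis by (metis transpose_invertible transpose_transpose)
qed

lemma Ham_modal:
  fixes M K L U :: "real^'n^'n" and \<omega> :: "'n \<Rightarrow> real"
  assumes M_spd: "sym_pos_def M"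
    and L_fact: "M = L ** transpose L"
    and U_orth: "orthogonal_matrix U"
    and diag: "transpose U ** matrix_inv L ** K ** transpose (matrix_inv L) ** U
               = (\<chi> i j. if i = j then (\<omega> i)^2 else 0)"
  shows "Ham M K z = (\<Sum>i\<in>UNIV. (modal_Q L U \<omega> z $ i)^2 + (modal_P L U z $ i)^2) / 2"
proof -
  have Linv: "invertible L" by (rule L_invertible[OF M_spd L_fact])
  define Li where "Li = matrix_inv L"
  define A where "A = transpose U ** Li"
  define B where "B = transpose U ** transpose L"
  define D :: "real^'n^'n" where "D = (\<chi> i j. if i = j then (\<omega> i)^2 else 0)"
  have LLi: "L ** Li = mat 1" and LiL: "Li ** L = mat 1"
    using matrix_inv_props[OF Linv] by (auto simp: Li_def)
  have UU1: "U ** transpose U = mat 1" and UU2: "transpose U ** U = mat 1"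
    using U_orth by (auto simp: orthogonal_matrix_def)
  have BA: "transpose B ** A = mat 1"
  proof -
    have "transpose B ** A = L ** (U ** transpose U) ** Li"
      by (simp add: A_def B_def matrix_transpose_mul matrix_mul_assoc)
    also have "\<dots> = mat 1" by (simp add: UU1 LLi)
    finally show ?thesis .
  qed
  have AB: "transpose A ** B = mat 1"
  proof -
    have "transpose (transpose B ** A) = transpose A ** B" by (simp add: matrix_transpose_mul)
    then show ?thesis using BA by (simp add: transpose_mat)
  qed
  have DA: "D = A ** K ** transpose A"
    using diag by (simp add: D_def A_def Li_def matrix_transpose_mul matrix_mul_assoc)
  have KD: "K = transpose B ** D ** B"
  proof -
    have "transpose B ** D ** B = (transpose B ** A) ** K ** (transpose A ** B)"
      by (simp add: DA matrix_mul_assoc)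
    then show ?thesis by (simp add: BA AB)
  qed
  have Minv: "matrix_inv M = transpose Li ** Li"
  proof -
    have Mr: "M ** (transpose Li ** Li) = mat 1"
    proof -
      have "M ** (transpose Li ** Li) = L ** transpose (Li ** L) ** Li"
        by (simp add: L_fact matrix_transpose_mul matrix_mul_assoc)
      then show ?thesis by (simp add: LiL LLi)
    qed
    have "invertible M" using Mr invertible_right_inverse by blast
    then have "matrix_inv M ** M = mat 1" by (rule matrix_inv_props)
    note iM = this
    have "matrix_inv M = matrix_inv M ** (M ** (transpose Li ** Li))" by (simp add: Mr)
    also have "\<dots> = (matrix_inv M ** M) ** (transpose Li ** Li)" by (simp only: matrix_mul_assoc)
    also have "\<dots> = transpose Li ** Li" by (simp add: iM)
    finally show ?thesis .
  qed
  have Q_eq: "modal_Q L U \<omega> z = (\<chi> i. \<omega> i * (B *v fst z) $ i)"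
    by (simp add: modal_Q_def B_def)
  have P_eq: "modal_P L U z = A *v snd z" by (simp add: modal_P_def A_def Li_def)
  have p_part: "snd z \<bullet> (matrix_inv M *v snd z) = (A *v snd z) \<bullet> (A *v snd z)"
  proof -
    have "snd z \<bullet> (matrix_inv M *v snd z) = (Li *v snd z) \<bullet> (Li *v snd z)"
      by (metis Minv dot_transpose_mv inner_commute matrix_vector_mul_assoc)
    also have "\<dots> = (Li *v snd z) \<bullet> ((U ** transpose U) *v (Li *v snd z))" by (simp add: UU1)
    also have "\<dots> = (A *v snd z) \<bullet> (A *v snd z)"
      by (metis A_def dot_transpose_mv inner_commute matrix_vector_mul_assoc)
    finally show ?thesis .
  qed
  have q_part: "fst z \<bullet> (K *v fst z) = (\<Sum>i\<in>UNIV. (\<omega> i * (B *v fst z) $ i)^2)"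
  proof -
    have "fst z \<bullet> (K *v fst z) = (B *v fst z) \<bullet> (D *v (B *v fst z))"
      by (metis KD dot_transpose_mv inner_commute matrix_vector_mul_assoc)
    also have "\<dots> = (\<Sum>i\<in>UNIV. (\<omega> i * (B *v fst z) $ i)^2)"
    proof -
      have ifm: "\<And>P a b. (if P then a else 0) * b = (if P then a * b else (0::real))" by simp
      have "\<And>y. D *v y = (\<chi> i. (\<omega> i)^2 * y $ i)"
        by (simp add: D_def matrix_vector_mult_def vec_eq_iff ifm)
      then have "D *v (B *v fst z) = (\<chi> i. (\<omega> i)^2 * (B *v fst z) $ i)" by blast
      then show ?thesis by (simp add: inner_vec_def power2_eq_square mult_ac)
    qed
    finally show ?thesis .
  qed
  show ?thesis
    unfolding Ham_def p_part q_part Q_eq P_eq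
    by (simp add: inner_vec_def sum.distrib power2_eq_square)
qed




lemma modal_surj:
  fixes M L U :: "real^'n^'n" and \<omega> :: "'n \<Rightarrow> real"
  assumes M_spd: "sym_pos_def M"
    and L_fact: "M = L ** transpose L"
    and U_orth: "orthogonal_matrix U"
    and \<omega>_pos: "\<And>i. \<omega> i > 0"
  shows "\<exists>z. modal_Q L U \<omega> z = x \<and> modal_P L U z = y"
proof -
  have Linv: "invertible L" by (rule L_invertible[OF M_spd L_fact])
  define Li where "Li = matrix_inv L"
  define A where "A = transpose U ** Li"
  define B where "B = transpose U ** transpose L"
  have LLi: "L ** Li = mat 1" and LiL: "Li ** L = mat 1"
    using matrix_inv_props[OF Linv] by (auto simp: Li_def)
  have UU1: "U ** transpose U = mat 1" and UU2: "transpose U ** U = mat 1"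
    using U_orth by (auto simp: orthogonal_matrix_def)
  have BA: "transpose B ** A = mat 1"
  proof -
    have "transpose B ** A = L ** (U ** transpose U) ** Li"
      by (simp add: A_def B_def matrix_transpose_mul matrix_mul_assoc)
    also have "\<dots> = mat 1" by (simp add: UU1 LLi)
    finally show ?thesis .
  qed
  then have AB': "A ** transpose B = mat 1" by (rule matrix_left_right_inverse1)
  have BAt: "B ** transpose A = mat 1"
  proof -
    have "transpose (A ** transpose B) = B ** transpose A" by (simp add: matrix_transpose_mul)
    then show ?thesis using AB' by (simp add: transpose_mat)
  qed
  have ALU: "A ** (L ** U) = mat 1"
  proof -
    have "A ** (L ** U) = transpose U ** (Li ** L) ** U" by (simp add: A_def matrix_mul_assoc)
    then show ?thesis by (simp add: LiL UU2)
  qed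
  define w where "w = (\<chi> i. x $ i / \<omega> i)"
  define z where "z = (transpose A *v w, (L ** U) *v y)"
  have "B *v fst z = w" unfolding z_def fst_conv matrix_vector_mul_assoc BAt by (rule matrix_vector_mul_lid)
  then have "modal_Q L U \<omega> z = x"
    using \<omega>_pos by (simp add: modal_Q_def B_def w_def vec_eq_iff less_imp_neq[symmetric])
  moreover have "modal_P L U z = y"
    by (simp add: modal_P_def z_def matrix_vector_mul_assoc ALU[unfolded A_def Li_def])
  ultimately show ?thesis by blast
qed


lemma ab_alg:
  fixes x s co :: real
  assumes x: "x \<noteq> 0" and cs: "co^2 = 1 - s^2"
  shows "(co^2 + (- (s / x))^2 - 1) / 2 + ((x * s)^2 + co^2 - 1) / 2 = s^2 * ((1/2) * (x - 1 / x)^2)"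
proof -
  have "(co^2 + (- (s / x))^2 - 1) / 2 + ((x * s)^2 + co^2 - 1) / 2
      = ((s / x)^2 + (x * s)^2 - 2 * s^2) / 2" unfolding cs using x by (simp add: power2_eq_square field_simps)
  also have "\<dots> = s^2 * ((1/2) * (x - 1 / x)^2)" using x
    by (simp add: power2_eq_square field_simps)
  finally show ?thesis .
qed

theorem theorem6p2:
  fixes M K L U :: "real^'n^'n"
    and \<omega> :: "'n \<Rightarrow> real"
    and \<theta> chi :: "real \<Rightarrow> real"
    and h :: real
    and \<psi> :: "(real^'n) \<times> (real^'n) \<Rightarrow> (real^'n) \<times> (real^'n)"
    and n :: nat
  assumes M_spd: "sym_pos_def M"
    and K_spd: "sym_pos_def K"
    and L_fact: "M = L ** transpose L"
    and U_orth: "orthogonal_matrix U"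
    and diag: "transpose U ** matrix_inv L ** K ** transpose (matrix_inv L) ** U
               = (\<chi> i j. if i = j then (\<omega> i)^2 else 0)"
    and \<omega>_pos: "\<And>i. \<omega> i > 0"
    and h_pos: "h > 0"
    and chi_nz: "\<And>k. k > 0 \<Longrightarrow> chi k \<noteq> 0"
    and \<psi>_Q: "\<And>z i. modal_Q L U \<omega> (\<psi> z) $ i
               = cos (\<theta> (\<omega> i * h)) * modal_Q L U \<omega> z $ i
                 + chi (\<omega> i * h) * sin (\<theta> (\<omega> i * h)) * modal_P L U z $ i"
    and \<psi>_P: "\<And>z i. modal_P L U (\<psi> z) $ i
               = - (sin (\<theta> (\<omega> i * h)) / chi (\<omega> i * h)) * modal_Q L U \<omega> z $ i
                 + cos (\<theta> (\<omega> i * h)) * modal_P L U z $ i"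
  shows "let E = (LINT z|lborel. (Ham M K ((\<psi> ^^ n) z) - Ham M K z) * exp (- Ham M K z))
                 / (LINT z|lborel. exp (- Ham M K z))
         in 0 \<le> E \<and> E \<le> (\<Sum>j\<in>UNIV. rho chi (\<omega> j * h))"
proof -
  define Qm where "Qm = modal_Q L U \<omega>"
  define Pm where "Pm = modal_P L U"
  define T where "T z = (Qm z, Pm z)" for z
  have linT: "linear T"
  proof (rule linearI)
    fix x y :: "(real^'n) \<times> (real^'n)" and c :: real
    show "T (x + y) = T x + T y"
      by (simp add: T_def Qm_def Pm_def modal_Q_def modal_P_def matrix_vector_right_distrib vec_eq_iff algebra_simps)
    show "T (c *\<^sub>R x) = c *\<^sub>R T x"
      by (simp add: T_def Qm_def Pm_def modal_Q_def modal_P_def matrix_vector_mult_scaleR vec_eq_iff algebra_simps)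
  qed
  have surT: "surj T"
  proof -
    have "\<exists>z. w = T z" for w
    proof -
      obtain z where "modal_Q L U \<omega> z = fst w \<and> modal_P L U z = snd w"
        using modal_surj[where M=M and L=L and U=U and \<omega>=\<omega> and x="fst w" and y="snd w"]
          M_spd L_fact U_orth \<omega>_pos by blast
      then have "w = T z" by (simp add: T_def Qm_def Pm_def prod_eq_iff)
      then show ?thesis by blast
    qed
    then show ?thesis by (auto simp: surj_def)
  qed
  have TT: "T z \<bullet> T z = (\<Sum>i\<in>UNIV. (Qm z $ i)^2 + (Pm z $ i)^2)" for z
    by (simp add: T_def inner_Pair inner_vec_def power2_eq_square sum.distrib)
  have HT: "Ham M K z = (\<Sum>i\<in>UNIV. (Qm z $ i)^2 + (Pm z $ i)^2) / 2" for z
    unfolding Qm_def Pm_def by (rule Ham_modal[OF M_spd L_fact U_orth diag])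
  have expH: "exp (- Ham M K z) = Phi T z" for z
    by (simp add: HT TT Phi_def[OF linT])
  define \<Theta> where "\<Theta> i = \<theta> (\<omega> i * h)" for i
  define C where "C i = chi (\<omega> i * h)" for i
  have Cnz: "C i \<noteq> 0" for i unfolding C_def using chi_nz \<omega>_pos h_pos by simp
  have dyn: "Qm ((\<psi> ^^ m) z) $ i = cos (m * \<Theta> i) * Qm z $ i + C i * sin (m * \<Theta> i) * Pm z $ i
           \<and> Pm ((\<psi> ^^ m) z) $ i = - (sin (m * \<Theta> i) / C i) * Qm z $ i + cos (m * \<Theta> i) * Pm z $ i"
    for m z i
  proof (induction m)
    case 0
    then show ?case by simp
  next
    case (Suc m)
    have q: "Qm ((\<psi> ^^ Suc m) z) $ i = cos (\<Theta> i) * Qm ((\<psi> ^^ m) z) $ i + C i * sin (\<Theta> i) * Pm ((\<psi> ^^ m) z) $ i"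
      using \<psi>_Q by (simp add: Qm_def Pm_def \<Theta>_def C_def)
    have p: "Pm ((\<psi> ^^ Suc m) z) $ i = - (sin (\<Theta> i) / C i) * Qm ((\<psi> ^^ m) z) $ i + cos (\<Theta> i) * Pm ((\<psi> ^^ m) z) $ i"
      using \<psi>_P by (simp add: Qm_def Pm_def \<Theta>_def C_def)
    have a: "Suc m * \<Theta> i = m * \<Theta> i + \<Theta> i" by (simp add: algebra_simps)
    show ?case unfolding q p using Suc.IH Cnz[of i]
      by (simp only: a cos_add sin_add) (simp add: field_simps)
  qed
  define a where "a i = cos (n * \<Theta> i)" for i
  define b where "b i = C i * sin (n * \<Theta> i)" for i
  define c where "c i = - (sin (n * \<Theta> i) / C i)" for i
  define \<alpha> where "\<alpha> i = ((a i)^2 + (c i)^2 - 1) / 2" for i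
  define \<beta> where "\<beta> i = ((b i)^2 + (a i)^2 - 1) / 2" for i
  define \<gamma> where "\<gamma> i = a i * b i + c i * a i" for i
  have HN: "Ham M K ((\<psi> ^^ n) z) - Ham M K z
      = (\<Sum>i\<in>UNIV. \<alpha> i * (Qm z $ i)^2 + \<beta> i * (Pm z $ i)^2 + \<gamma> i * (Qm z $ i * Pm z $ i))" for z
  proof -
    have "Ham M K ((\<psi> ^^ n) z) - Ham M K z
      = (\<Sum>i\<in>UNIV. ((a i * Qm z $ i + b i * Pm z $ i)^2 + (c i * Qm z $ i + a i * Pm z $ i)^2) / 2
            - ((Qm z $ i)^2 + (Pm z $ i)^2) / 2)"
      by (simp add: HT dyn a_def b_def c_def sum_subtractf sum_divide_distrib)
    also have "\<dots> = (\<Sum>i\<in>UNIV. \<alpha> i * (Qm z $ i)^2 + \<beta> i * (Pm z $ i)^2 + \<gamma> i * (Qm z $ i * Pm z $ i))"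
      by (rule sum.cong) (simp_all add: \<alpha>_def \<beta>_def \<gamma>_def power2_eq_square field_simps)
    finally show ?thesis .
  qed
  have ab: "\<alpha> i + \<beta> i = (sin (n * \<Theta> i))^2 * rho chi (\<omega> i * h)" for i
  proof -
    have cs: "(cos (n * \<Theta> i))^2 = 1 - (sin (n * \<Theta> i))^2" by (simp add: cos_squared_eq)
    have rC: "rho chi (\<omega> i * h) = (1/2) * (C i - 1 / C i)^2" by (simp add: rho_def C_def)
    show ?thesis unfolding \<alpha>_def \<beta>_def a_def b_def c_def rC by (rule ab_alg[OF Cnz cs])
  qed
  have rho_nn: "0 \<le> rho chi x" for x by (simp add: rho_def)
  have den: "(LINT z|lborel. exp (- Ham M K z)) = (\<integral>z. Phi T z \<partial>lborel)"
    by (simp add: expH)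
  have num: "(LINT z|lborel. (Ham M K ((\<psi> ^^ n) z) - Ham M K z) * exp (- Ham M K z))
      = (LINT z|lborel. (\<Sum>i\<in>UNIV. \<alpha> i * ((Qm z $ i)^2 * Phi T z) + \<beta> i * ((Pm z $ i)^2 * Phi T z)
            + \<gamma> i * (Qm z $ i * Pm z $ i * Phi T z)))"
  proof -
    have "(Ham M K ((\<psi> ^^ n) z) - Ham M K z) * exp (- Ham M K z)
      = (\<Sum>i\<in>UNIV. \<alpha> i * ((Qm z $ i)^2 * Phi T z) + \<beta> i * ((Pm z $ i)^2 * Phi T z)
            + \<gamma> i * (Qm z $ i * Pm z $ i * Phi T z))" for z
      unfolding HN expH sum_distrib_right by (intro sum.cong refl) (simp add: algebra_simps)
    then show ?thesis by simp
  qed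
  define Z where "Z = (\<integral>z. Phi T z \<partial>lborel)"
  define S where "S = (\<Sum>i\<in>UNIV. (sin (n * \<Theta> i))^2 * rho chi (\<omega> i * h))"
  have s2le: "(sin x)^2 \<le> 1" for x :: real by (simp add: abs_square_le_1 abs_sin_le_one)
  have S_bounds: "0 \<le> S \<and> S \<le> (\<Sum>j\<in>UNIV. rho chi (\<omega> j * h))"
    unfolding S_def using rho_nn s2le
    by (auto intro!: sum_nonneg sum_mono mult_left_le_one_le)
  show ?thesis
  proof (cases "integrable lborel (Phi T) \<and> Z \<noteq> 0")
    case False
    then have "Z = 0" using not_integrable_integral_eq unfolding Z_def by blast
    then show ?thesis unfolding Let_def den Z_def[symmetric] by (simp add: sum_nonneg rho_nn)
  next
    case True
    then have int: "integrable lborel (Phi T)" and Znz: "Z \<noteq> 0" by auto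
    note mom = moment[OF linT surT int]
    define eQ :: "'n \<Rightarrow> (real^'n) \<times> (real^'n)" where "eQ i = (axis i (1::real), 0::real^'n)" for i
    define eP :: "'n \<Rightarrow> (real^'n) \<times> (real^'n)" where "eP i = (0::real^'n, axis i (1::real))" for i
    define e1 :: "'n \<Rightarrow> (real^'n) \<times> (real^'n)" where "e1 i = (axis i (1::real), axis i (1::real))" for i
    define e2 :: "'n \<Rightarrow> (real^'n) \<times> (real^'n)" where "e2 i = (axis i (1::real), - axis i (1::real))" for i
    have eQT: "eQ i \<bullet> T z = Qm z $ i" for i z by (simp add: eQ_def T_def inner_Pair inner_axis')
    have ePT: "eP i \<bullet> T z = Pm z $ i" for i z by (simp add: eP_def T_def inner_Pair inner_axis')
    have e1T: "e1 i \<bullet> T z = Qm z $ i + Pm z $ i" for i z by (simp add: e1_def T_def inner_Pair inner_axis')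
    have e2T: "e2 i \<bullet> T z = Qm z $ i - Pm z $ i" for i z by (simp add: e2_def T_def inner_Pair inner_axis')
    have eQQ: "eQ i \<bullet> eQ i = 1" for i by (simp add: eQ_def inner_Pair inner_axis_axis)
    have ePP: "eP i \<bullet> eP i = 1" for i by (simp add: eP_def inner_Pair inner_axis_axis)
    have e11: "e1 i \<bullet> e1 i = 2" for i by (simp add: e1_def inner_Pair inner_axis_axis)
    have e22: "e2 i \<bullet> e2 i = 2" for i by (simp add: e2_def inner_Pair inner_axis_axis)
    define IQ where "IQ i = (\<integral>z. (Qm z $ i)^2 * Phi T z \<partial>lborel)" for i
    define IP where "IP i = (\<integral>z. (Pm z $ i)^2 * Phi T z \<partial>lborel)" for i
    define IQP where "IQP i = (\<integral>z. Qm z $ i * Pm z $ i * Phi T z \<partial>lborel)" for i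
    have iQ: "integrable lborel (\<lambda>z. (Qm z $ i)^2 * Phi T z)" for i
      using mom(1)[of "eQ i"] unfolding eQT .
    have iP: "integrable lborel (\<lambda>z. (Pm z $ i)^2 * Phi T z)" for i
      using mom(1)[of "eP i"] unfolding ePT .
    have i1: "integrable lborel (\<lambda>z. (Qm z $ i + Pm z $ i)^2 * Phi T z)" for i
      using mom(1)[of "e1 i"] unfolding e1T .
    have i2: "integrable lborel (\<lambda>z. (Qm z $ i - Pm z $ i)^2 * Phi T z)" for i
      using mom(1)[of "e2 i"] unfolding e2T .
    have IQle: "IQ i \<le> Z" for i
      using mom(2)[of "eQ i"] unfolding eQT eQQ IQ_def Z_def by simp
    have IPle: "IP i \<le> Z" for i
      using mom(2)[of "eP i"] unfolding ePT ePP IP_def Z_def by simp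
    have I1le: "(\<integral>z. (Qm z $ i + Pm z $ i)^2 * Phi T z \<partial>lborel) \<le> 2 * Z" for i
      using mom(2)[of "e1 i"] unfolding e1T e11 Z_def by simp
    have I2le: "(\<integral>z. (Qm z $ i - Pm z $ i)^2 * Phi T z \<partial>lborel) \<le> 2 * Z" for i
      using mom(2)[of "e2 i"] unfolding e2T e22 Z_def by simp
    have QPeq1: "Qm z $ i * Pm z $ i * Phi T z = (1/2) * ((Qm z $ i + Pm z $ i)^2 * Phi T z
        - (Qm z $ i)^2 * Phi T z - (Pm z $ i)^2 * Phi T z)" for z i
      by (simp add: power2_eq_square algebra_simps)
    have QPeq2: "Qm z $ i * Pm z $ i * Phi T z = (1/2) * ((Qm z $ i)^2 * Phi T z
        + (Pm z $ i)^2 * Phi T z - (Qm z $ i - Pm z $ i)^2 * Phi T z)" for z i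
      by (simp add: power2_eq_square algebra_simps)
    have iQP: "integrable lborel (\<lambda>z. Qm z $ i * Pm z $ i * Phi T z)" for i
      unfolding QPeq1 by (intro integrable_mult_right Bochner_Integration.integrable_diff i1 iQ iP)
    have IQP1: "IQP i = (1/2) * ((\<integral>z. (Qm z $ i + Pm z $ i)^2 * Phi T z \<partial>lborel) - IQ i - IP i)" for i
      unfolding IQP_def IQ_def IP_def QPeq1
      by (simp add: Bochner_Integration.integral_diff Bochner_Integration.integrable_diff i1 iQ iP)
    have IQP2: "IQP i = (1/2) * (IQ i + IP i - (\<integral>z. (Qm z $ i - Pm z $ i)^2 * Phi T z \<partial>lborel))" for i
      unfolding IQP_def IQ_def IP_def QPeq2
      by (simp add: Bochner_Integration.integral_diff Bochner_Integration.integrable_diff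
          Bochner_Integration.integral_add Bochner_Integration.integrable_add i2 iQ iP)
    have TTsum: "(T z \<bullet> T z) * Phi T z = (\<Sum>i\<in>UNIV. (Qm z $ i)^2 * Phi T z + (Pm z $ i)^2 * Phi T z)" for z
      unfolding TT sum_distrib_right by (simp add: algebra_simps)
    have intW: "integrable lborel (\<lambda>z. (T z \<bullet> T z) * Phi T z)"
      unfolding TTsum by (intro Bochner_Integration.integrable_sum Bochner_Integration.integrable_add iQ iP)
    have Wsum: "(\<integral>z. (T z \<bullet> T z) * Phi T z \<partial>lborel) = (\<Sum>i\<in>UNIV. IQ i + IP i)"
      unfolding TTsum IQ_def IP_def
      by (simp add: Bochner_Integration.integral_sum Bochner_Integration.integral_add Bochner_Integration.integrable_add iQ iP)
    have sl: "real DIM((real^'n) \<times> (real^'n)) * Z \<le> (\<Sum>i\<in>UNIV. IQ i + IP i)"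
      using scale_lb[OF linT int intW] unfolding Wsum Z_def .
    then have sl2: "real (2 * CARD('n)) * Z \<le> (\<Sum>i\<in>UNIV. IQ i + IP i)" by simp
    have sumz: "(\<Sum>i\<in>UNIV. (Z - IQ i) + (Z - IP i)) = real (2 * CARD('n)) * Z - (\<Sum>i\<in>UNIV. IQ i + IP i)"
      by (simp add: sum.distrib sum_subtractf algebra_simps)
    have nn: "0 \<le> (Z - IQ i) + (Z - IP i)" if "i \<in> UNIV" for i
      using IQle[of i] IPle[of i] by linarith
    have s0: "0 \<le> (\<Sum>i\<in>UNIV. (Z - IQ i) + (Z - IP i))" by (rule sum_nonneg) (rule nn)
    have "(\<Sum>i\<in>UNIV. (Z - IQ i) + (Z - IP i)) = 0"
      using sl2 sumz s0 by linarith
    then have allz: "\<forall>i\<in>UNIV. (Z - IQ i) + (Z - IP i) = 0"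
      using sum_nonneg_eq_0_iff[OF finite_class.finite_UNIV, of "\<lambda>i. (Z - IQ i) + (Z - IP i)"] nn by blast
    have IQZ: "IQ i = Z" and IPZ: "IP i = Z" for i
    proof -
      have "(Z - IQ i) + (Z - IP i) = 0" using allz by blast
      then show "IQ i = Z" "IP i = Z" using IQle[of i] IPle[of i] by linarith+
    qed
    have IQP0: "IQP i = 0" for i
    proof -
      have a1: "IQP i \<le> 0" using IQP1[of i, unfolded right_diff_distrib] I1le[of i] IQZ[of i] IPZ[of i] by linarith
      have a2: "IQP i \<ge> 0" using IQP2[of i, unfolded right_diff_distrib distrib_left] I2le[of i] IQZ[of i] IPZ[of i] by linarith
      from a1 a2 show ?thesis by linarith
    qed
    have "(LINT z|lborel. (\<Sum>i\<in>UNIV. \<alpha> i * ((Qm z $ i)^2 * Phi T z) + \<beta> i * ((Pm z $ i)^2 * Phi T z)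
            + \<gamma> i * (Qm z $ i * Pm z $ i * Phi T z)))
        = (\<Sum>i\<in>UNIV. \<alpha> i * IQ i + \<beta> i * IP i + \<gamma> i * IQP i)"
      unfolding IQ_def IP_def IQP_def
      by (simp add: Bochner_Integration.integral_sum Bochner_Integration.integral_add Bochner_Integration.integrable_add
          integrable_mult_right iQ iP iQP)
    also have "\<dots> = Z * S"
      unfolding S_def sum_distrib_left
    proof (intro sum.cong refl)
      fix i :: 'n
      have "\<alpha> i * IQ i + \<beta> i * IP i + \<gamma> i * IQP i = Z * (\<alpha> i + \<beta> i)"
        by (simp add: IQZ IPZ IQP0 algebra_simps)
      then show "\<alpha> i * IQ i + \<beta> i * IP i + \<gamma> i * IQP i = Z * ((sin (n * \<Theta> i))^2 * rho chi (\<omega> i * h))"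
        by (simp only: ab)
    qed
    finally have numZ: "(LINT z|lborel. (Ham M K ((\<psi> ^^ n) z) - Ham M K z) * exp (- Ham M K z)) = Z * S"
      unfolding num .
    show ?thesis unfolding Let_def den Z_def[symmetric] numZ using Znz S_bounds by simp
  qed
qed

end
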